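(* For every integer $n \geq 1$, \[ \sum_{\sigma\in\mathcal{Q}_n} x^{\operatorname{ap}(\sigma)}(-1)^{\operatorname{even}(\sigma)} = \sum_{\pi\in \overline{\mathfrak{S}}_n}x^{\operatorname{asc}(\pi)}(-1)^{\operatorname{mark}(\pi)} = 1. \]
   Context: Let $[n]_2$ be the multiset $\{1,1,2,2,\dots,n,n\}$. A Stirling permutation of order $n$ is a permutation $\sigma=\sigma_1\cdots\sigma_{2n}$ of $[n]_2$ such that for each $i\in[n]$ every entry between the two occurrences of $i$ is greater than $i$; $\mathcal{Q}_n$ denotes the set of these. An ascent plateau of $\sigma$ is an entry $\sigma_i$ with $2\le i\le 2n-1$ and $\sigma_{i-1}<\sigma_i=\sigma_{i+1}$; $\operatorname{ap}(\sigma)$ is their number. An entry $k$ of $\sigma$ is even indexed if the first occurrence of $k$ is at an even position; $\operatorname{even}(\sigma)$ is the number of even indexed values. A left-to-right minimum of a permutation $\pi=\pi_1\cdots\pi_n$ is an entry $\pi_i$ with $i=1$ or $\pi_i<\pi_j$ for all $j<i$. A marked permutation of $[n]$ is a permutation of $[n]$ together with marks on some (possibly none) of its entries that are not left-to-right minima; $\overline{\mathfrak{S}}_n$ is the set of marked permutations of $[n]$. For $\pi\in\overline{\mathfrak{S}}_n$, $\operatorname{mark}(\pi)$ is the number of marked entries and $\operatorname{asc}(\pi)$ is the number of $i\in\{2,\dots,n\}$ with $\pi_i>\pi_{i-1}$ (marks ignored). *)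

theory Defs
  imports "HOL-Library.Multiset"
begin

text \<open>Lists are 0-indexed; the paper's position p (1-indexed) is list index p-1.\<close>

definition stirling_perms :: "nat \<Rightarrow> nat list set" where
  "stirling_perms n = {\<sigma>. mset \<sigma> = mset ([1..<n+1] @ [1..<n+1]) \<and>
     (\<forall>i\<in>{1..n}. \<forall>a b c. a < b \<and> b < c \<and> c < length \<sigma> \<and> \<sigma>!a = i \<and> \<sigma>!c = i \<longrightarrow> \<sigma>!b > i)}"

text \<open>ascent plateaux: paper positions 2..2n-1, i.e. list indices 1..2n-2\<close>
definition ap :: "nat list \<Rightarrow> nat" where
  "ap \<sigma> = card {j. 1 \<le> j \<and> j + 1 < length \<sigma> \<and> \<sigma>!(j-1) < \<sigma>!j \<and> \<sigma>!j = \<sigma>!(j+1)}"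

definition first_pos :: "nat list \<Rightarrow> nat \<Rightarrow> nat" where
  "first_pos \<sigma> k = (LEAST j. j < length \<sigma> \<and> \<sigma>!j = k)"

text \<open>even indexed: first occurrence at an even (1-indexed) position, i.e. odd 0-indexed index\<close>
definition even_idx :: "nat list \<Rightarrow> nat" where
  "even_idx \<sigma> = card {k \<in> set \<sigma>. odd (first_pos \<sigma> k)}"

definition lrmin :: "nat list \<Rightarrow> nat \<Rightarrow> bool" where
  "lrmin \<pi> i \<longleftrightarrow> i < length \<pi> \<and> (\<forall>j<i. \<pi>!i < \<pi>!j)"

definition marked_perms :: "nat \<Rightarrow> (nat list \<times> nat set) set" where
  "marked_perms n = {(\<pi>, M). distinct \<pi> \<and> set \<pi> = {1..n} \<and>
      M \<subseteq> {i. i < length \<pi> \<and> \<not> lrmin \<pi> i}}"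

definition asc :: "nat list \<Rightarrow> nat" where
  "asc \<pi> = card {i. 1 \<le> i \<and> i < length \<pi> \<and> \<pi>!(i-1) < \<pi>!i}"

end

theory Submission imports Defs begin

lemma pow_alt: assumes "finite S" "S \<noteq> {}"
  shows "(\<Sum>T\<in>Pow S. (-1::'a::comm_ring_1) ^ card T) = 0"
proof (rule sum_alternating_cancels)
  show "finite (Pow S)" using assms by simp
  have "{} \<subset> S" using assms by auto
  from card_subsupersets_even_odd[OF assms(1) this]
  show "card {x \<in> Pow S. even (card x)} = card {x \<in> Pow S. odd (card x)}"
    by (simp add: Pow_def)
qed

lemma all_lrmin_dec:
  assumes "\<forall>i<length \<pi>. lrmin \<pi> i" shows "sorted (rev \<pi>)" "distinct \<pi>"
proof -
  have sw: "sorted_wrt (>) \<pi>" unfolding sorted_wrt_iff_nth_less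
    using assms by (auto simp: lrmin_def)
  have "sorted_wrt (<) (rev \<pi>)" using sw by (simp add: sorted_wrt_rev)
  then have "sorted (rev \<pi>) \<and> distinct (rev \<pi>)" by (simp only: strict_sorted_iff)
  then show "sorted (rev \<pi>)" "distinct \<pi>" by auto
qed

definition dec :: "nat \<Rightarrow> nat list" where "dec n = rev [1..<n+1]"

lemma dec_len[simp]: "length (dec n) = n" by (simp add: dec_def)

lemma d_nth: "i < n \<Longrightarrow> dec n ! i = n - i"
  unfolding dec_def by (simp add: rev_nth del: upt_Suc)

lemma asc_dec: "asc (dec n) = 0"
proof -
  have "{i. 1 \<le> i \<and> i < length (dec n) \<and> dec n!(i-1) < dec n!i} = {}"
    by (auto simp: d_nth)
  then show ?thesis by (simp add: asc_def)
qed

lemma lrmin_dec: "i < n \<Longrightarrow> lrmin (dec n) i"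
  unfolding lrmin_def by (auto simp: d_nth)

lemma marked_side: "(\<Sum>(\<pi>, M)\<in>marked_perms n. (x::'a::comm_ring_1) ^ asc \<pi> * (-1) ^ card M) = 1"
proof -
  define P where "P = {\<pi>. distinct \<pi> \<and> set \<pi> = {1..n}}"
  define S where "S \<pi> = {i. i < length \<pi> \<and> \<not> lrmin \<pi> i}" for \<pi>
  define d where "d = dec n"
  have mp: "marked_perms n = Sigma P (\<lambda>\<pi>. Pow (S \<pi>))"
    by (auto simp: marked_perms_def P_def S_def)
  have finP: "finite P" unfolding P_def
    by (rule finite_subset[OF _ finite_subset_distinct[of "{1..n}"]]) auto
  have finS: "finite (S \<pi>)" for \<pi> unfolding S_def by auto
  have inner: "(\<Sum>M\<in>Pow (S \<pi>). (x::'a) ^ asc \<pi> * (-1) ^ card M) = (if \<pi> = d then 1 else 0)"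
    if "\<pi> \<in> P" for \<pi>
  proof (cases "S \<pi> = {}")
    case True
    then have all: "\<forall>i<length \<pi>. lrmin \<pi> i" by (auto simp: S_def)
    have s1: "sorted (rev \<pi>)" "distinct (rev \<pi>)" using all_lrmin_dec[OF all] by auto
    have s2: "set (rev \<pi>) = set [1..<n+1]" using that unfolding P_def
      by (simp only: set_rev set_upt mem_Collect_eq atLeastLessThanSuc_atLeastAtMost Suc_eq_plus1[symmetric])
    have "rev \<pi> = [1..<n+1]"
      by (rule sorted_distinct_set_unique[OF s1 sorted_upt distinct_upt s2])
    then have "\<pi> = d" by (metis rev_rev_ident d_def dec_def)
    moreover have "asc d = 0" unfolding d_def by (rule asc_dec)
    ultimately show ?thesis using True by simp
  next
    case False
    have "(\<Sum>M\<in>Pow (S \<pi>). (x::'a) ^ asc \<pi> * (-1) ^ card M) = x ^ asc \<pi> * (\<Sum>M\<in>Pow (S \<pi>). (-1) ^ card M)"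
      by (simp add: sum_distrib_left)
    also have "\<dots> = 0" by (metis pow_alt[OF finS False] mult_zero_right)
    finally have z: "(\<Sum>M\<in>Pow (S \<pi>). (x::'a) ^ asc \<pi> * (-1) ^ card M) = 0" .
    have "\<pi> \<noteq> d"
    proof
      assume "\<pi> = d"
      then have "\<forall>i<length \<pi>. lrmin \<pi> i" by (auto simp: d_def intro: lrmin_dec)
      then show False using False by (auto simp: S_def)
    qed
    then show ?thesis using z by simp
  qed
  have dP: "d \<in> P" by (auto simp: P_def d_def dec_def)
  have "(\<Sum>(\<pi>, M)\<in>marked_perms n. (x::'a) ^ asc \<pi> * (-1) ^ card M)
      = (\<Sum>\<pi>\<in>P. \<Sum>M\<in>Pow (S \<pi>). x ^ asc \<pi> * (-1) ^ card M)"
    unfolding mp by (rule sum.Sigma[symmetric]) (auto simp: finP finS)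
  also have "\<dots> = (\<Sum>\<pi>\<in>P. if \<pi> = d then 1 else 0)" by (rule sum.cong) (auto simp: inner)
  also have "\<dots> = 1" using finP dP by simp
  finally show ?thesis .
qed

definition ins :: "nat list \<Rightarrow> nat \<Rightarrow> nat \<Rightarrow> nat list" where
  "ins \<tau> i N = take i \<tau> @ N # N # drop i \<tau>"

lemma ins_len[simp]: "i \<le> length \<tau> \<Longrightarrow> length (ins \<tau> i N) = length \<tau> + 2"
  by (simp add: ins_def)

lemma ins_nth: "i \<le> length \<tau> \<Longrightarrow>
  ins \<tau> i N ! k = (if k < i then \<tau>!k else if k = i \<or> k = Suc i then N else \<tau>!(k-2))"
proof -
  assume il: "i \<le> length \<tau>"
  have lt: "length (take i \<tau>) = i" using il by simp
  show ?thesis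
  proof (cases "k < i")
    case True thus ?thesis unfolding ins_def using lt by (simp add: nth_append)
  next
    case False
    then have e: "ins \<tau> i N ! k = (N # N # drop i \<tau>) ! (k - i)"
      unfolding ins_def using lt by (simp add: nth_append)
    consider "k = i" | "k = Suc i" | "k \<ge> i + 2" using False by linarith
    then show ?thesis
    proof cases
      case 1 then show ?thesis using e by simp
    next
      case 2 then show ?thesis using e by simp
    next
      case 3
      then have "k - i = Suc (Suc (k - i - 2))" by simp
      then have "(N # N # drop i \<tau>) ! (k - i) = drop i \<tau> ! (k - i - 2)" by simp
      also have "\<dots> = \<tau> ! (i + (k - i - 2))" using il by (simp only: nth_drop)
      also have "i + (k - i - 2) = k - 2" using 3 by simp
      finally show ?thesis using e 3 by simp
    qed
  qed
qed

definition stir_ok :: "nat list \<Rightarrow> bool" where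
  "stir_ok \<sigma> \<longleftrightarrow> (\<forall>a b c. a < b \<longrightarrow> b < c \<longrightarrow> c < length \<sigma> \<longrightarrow> \<sigma>!a = \<sigma>!c \<longrightarrow> \<sigma>!a < \<sigma>!b)"

definition Mn :: "nat \<Rightarrow> nat multiset" where
  "Mn n = mset ([1..<n+1] @ [1..<n+1])"

lemma Mn_set: "mset \<sigma> = Mn n \<Longrightarrow> set \<sigma> = {1..n}"
proof -
  assume "mset \<sigma> = Mn n"
  then have "set_mset (mset \<sigma>) = set_mset (Mn n)" by simp
  then show ?thesis by (simp add: Mn_def atLeastLessThanSuc_atLeastAtMost del: upt_Suc)
qed

lemma Mn_len: "mset \<sigma> = Mn n \<Longrightarrow> length \<sigma> = 2 * n"
proof -
  assume "mset \<sigma> = Mn n"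
  then have "size (mset \<sigma>) = size (Mn n)" by simp
  then show ?thesis by (simp add: Mn_def del: upt_Suc)
qed

lemma Mn_Suc: "Mn (Suc n) = Mn n + {#Suc n, Suc n#}"
  by (simp add: Mn_def)

lemma Q_iff: "\<sigma> \<in> stirling_perms n \<longleftrightarrow> mset \<sigma> = Mn n \<and> stir_ok \<sigma>"
proof
  assume h: "\<sigma> \<in> stirling_perms n"
  then have h': "mset \<sigma> = mset ([1..<n+1] @ [1..<n+1]) \<and> (\<forall>i\<in>{1..n}. \<forall>a b c. a < b \<and> b < c \<and> c < length \<sigma> \<and> \<sigma>!a = i \<and> \<sigma>!c = i \<longrightarrow> \<sigma>!b > i)"
    unfolding stirling_perms_def mem_Collect_eq .
  then have m: "mset \<sigma> = Mn n" unfolding Mn_def by (rule conjunct1)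
  have "stir_ok \<sigma>" unfolding stir_ok_def
  proof (intro allI impI)
    fix a b c assume H: "a < b" "b < c" "c < length \<sigma>" "\<sigma>!a = \<sigma>!c"
    have "a < length \<sigma>" using H by simp
    then have "\<sigma>!a \<in> set \<sigma>" by (rule nth_mem)
    then have "\<sigma>!a \<in> {1..n}" using Mn_set[OF m] by simp
    moreover have P: "a < b \<and> b < c \<and> c < length \<sigma> \<and> \<sigma>!a = \<sigma>!a \<and> \<sigma>!c = \<sigma>!a"
      using H by (intro conjI refl) (simp_all only: eq_commute)
    ultimately show "\<sigma>!a < \<sigma>!b" by (rule h'[THEN conjunct2, rule_format, of "\<sigma>!a" a b c])
  qed
  with m show "mset \<sigma> = Mn n \<and> stir_ok \<sigma>" by (rule conjI)
next
  assume A: "mset \<sigma> = Mn n \<and> stir_ok \<sigma>"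
  have m: "mset \<sigma> = Mn n" using A by (rule conjunct1)
  have ok: "stir_ok \<sigma>" using A by (rule conjunct2)
  have c: "\<forall>i\<in>{1..n}. \<forall>a b c. a < b \<and> b < c \<and> c < length \<sigma> \<and> \<sigma>!a = i \<and> \<sigma>!c = i \<longrightarrow> \<sigma>!b > i"
  proof (intro ballI allI impI)
    fix i a b c assume "i \<in> {1..n}" and H: "a < b \<and> b < c \<and> c < length \<sigma> \<and> \<sigma>!a = i \<and> \<sigma>!c = i"
    from H have H1: "a < b" "b < c" "c < length \<sigma>" "\<sigma>!a = i" "\<sigma>!c = i" by auto
    have "\<sigma>!a < \<sigma>!b" using ok[unfolded stir_ok_def, rule_format, OF H1(1) H1(2) H1(3)] H1(4) H1(5) by simp
    then show "\<sigma>!b > i" using H1(4) by simp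
  qed
  show "\<sigma> \<in> stirling_perms n" unfolding stirling_perms_def mem_Collect_eq
  proof (rule conjI)
    show "mset \<sigma> = mset ([1..<n+1] @ [1..<n+1])" using m unfolding Mn_def .
    show "\<forall>i\<in>{1..n}. \<forall>a b c. a < b \<and> b < c \<and> c < length \<sigma> \<and> \<sigma>!a = i \<and> \<sigma>!c = i \<longrightarrow> \<sigma>!b > i" by (rule c)
  qed
qed

lemma Q0: "stirling_perms 0 = {[]}"
proof -
  have M0: "Mn 0 = {#}" by (simp add: Mn_def)
  show ?thesis by (auto simp: Q_iff M0 stir_ok_def)
qed

lemma ins_mset: "i \<le> length \<tau> \<Longrightarrow> mset (ins \<tau> i N) = mset \<tau> + {#N, N#}"
proof -
  have "mset \<tau> = mset (take i \<tau>) + mset (drop i \<tau>)"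
    by (metis append_take_drop_id mset_append)
  then show ?thesis unfolding ins_def by simp
qed

lemma ins_Q:
  assumes tq: "\<tau> \<in> stirling_perms n" and il: "i \<le> length \<tau>"
  shows "ins \<tau> i (Suc n) \<in> stirling_perms (Suc n)"
proof -
  define N where "N = Suc n"
  define \<sigma> where "\<sigma> = ins \<tau> i N"
  have m: "mset \<tau> = Mn n" and ok: "stir_ok \<tau>" using tq by (auto simp: Q_iff)
  have lt: "\<tau>!k < N" if "k < length \<tau>" for k
    using Mn_set[OF m] that nth_mem[OF that] unfolding N_def by auto
  have m': "mset \<sigma> = Mn (Suc n)" unfolding \<sigma>_def N_def using ins_mset[OF il] m Mn_Suc by simp
  have len: "length \<sigma> = length \<tau> + 2" unfolding \<sigma>_def using il by simp
  define f where "f k = (if k < i then k else k - 2)" for k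
  have old: "\<sigma>!k = \<tau>!(f k) \<and> f k < length \<tau>" if "k < length \<sigma>" "k \<noteq> i" "k \<noteq> Suc i" for k
    using that il len unfolding \<sigma>_def f_def by (auto simp: ins_nth)
  have new: "\<sigma>!k = N" if "k = i \<or> k = Suc i" for k
    using that il unfolding \<sigma>_def by (auto simp: ins_nth)
  have ok': "stir_ok \<sigma>" unfolding stir_ok_def
  proof (intro allI impI)
    fix a b c assume ab: "a < b" and bc: "b < c" and cl: "c < length \<sigma>" and eq: "\<sigma>!a = \<sigma>!c"
    show "\<sigma>!a < \<sigma>!b"
    proof (cases "a = i \<or> a = Suc i")
      case True
      then have "\<sigma>!c = N" using eq new by simp
      then have "c = i \<or> c = Suc i" using old[OF cl] lt by fastforce
      then show ?thesis using True ab bc by auto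
    next
      case False
      then have oa: "\<sigma>!a = \<tau>!(f a)" "f a < length \<tau>" using old[of a] ab bc cl by auto
      show ?thesis
      proof (cases "b = i \<or> b = Suc i")
        case True
        then show ?thesis using new oa lt by simp
      next
        case Fb: False
        have Fc: "\<not> (c = i \<or> c = Suc i)"
        proof
          assume "c = i \<or> c = Suc i"
          then have "\<sigma>!c = N" using new by simp
          then show False using eq oa lt[of "f a"] by simp
        qed
        have ob: "\<sigma>!b = \<tau>!(f b)" "f b < length \<tau>" using old[of b] Fb bc cl by auto
        have oc: "\<sigma>!c = \<tau>!(f c)" "f c < length \<tau>" using old[of c] Fc cl by auto
        have "f a < f b" "f b < f c" using ab bc False Fb Fc unfolding f_def by auto
        then show ?thesis using ok[unfolded stir_ok_def, rule_format, of "f a" "f b" "f c"] oa ob oc eq by simp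
      qed
    qed
  qed
  show ?thesis using m' ok' unfolding \<sigma>_def N_def by (simp add: Q_iff)
qed

lemma ins_decomp:
  assumes sq: "\<sigma> \<in> stirling_perms (Suc n)"
  shows "\<exists>\<tau> i. \<tau> \<in> stirling_perms n \<and> i \<le> length \<tau> \<and> \<sigma> = ins \<tau> i (Suc n)"
proof -
  define N where "N = Suc n"
  have m: "mset \<sigma> = Mn (Suc n)" and ok: "stir_ok \<sigma>" using sq by (auto simp: Q_iff)
  have sset: "set \<sigma> = {1..N}" using Mn_set[OF m] N_def by simp
  have cnt: "count (mset \<sigma>) N = 2" using m unfolding Mn_Suc N_def
    by (simp add: Mn_def del: upt_Suc)
  have "N \<in> set \<sigma>" using sset by (simp add: N_def)
  then have ex: "\<exists>p. p < length \<sigma> \<and> \<sigma>!p = N" by (simp add: in_set_conv_nth)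
  define p where "p = (LEAST p. p < length \<sigma> \<and> \<sigma>!p = N)"
  have pl: "p < length \<sigma>" "\<sigma>!p = N" using LeastI_ex[OF ex] unfolding p_def by auto
  have pmin: "\<sigma>!j \<noteq> N" if "j < p" for j
    using not_less_Least[of j "\<lambda>p. p < length \<sigma> \<and> \<sigma>!p = N"] that pl unfolding p_def by auto
  have dec1: "\<sigma> = take p \<sigma> @ N # drop (Suc p) \<sigma>"
    using id_take_nth_drop[OF pl(1)] pl(2) by simp
  have "N \<notin> set (take p \<sigma>)"
    using pmin by (auto simp: in_set_conv_nth)
  then have c0: "count (mset (take p \<sigma>)) N = 0" by (simp add: count_eq_zero_iff)
  have "count (mset \<sigma>) N = count (mset (take p \<sigma>)) N + 1 + count (mset (drop (Suc p) \<sigma>)) N"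
    by (subst dec1) simp
  then have "count (mset (drop (Suc p) \<sigma>)) N = 1" using cnt c0 by simp
  then have "N \<in> set (drop (Suc p) \<sigma>)" by (metis count_eq_zero_iff one_neq_zero set_mset_mset)
  then obtain r where r: "r < length (drop (Suc p) \<sigma>)" "drop (Suc p) \<sigma> ! r = N"
    by (auto simp: in_set_conv_nth)
  define q where "q = Suc p + r"
  have ql: "q < length \<sigma>" "\<sigma>!q = N" "p < q" using r unfolding q_def by auto
  have "q = Suc p"
  proof (rule ccontr)
    assume "q \<noteq> Suc p"
    then have "Suc p < q" using ql by simp
    then have "N < \<sigma>!(Suc p)" using ok[unfolded stir_ok_def, rule_format, of p "Suc p" q] ql pl by simp
    moreover have "\<sigma>!(Suc p) \<in> {1..N}" using sset ql \<open>Suc p < q\<close> by (metis nth_mem order.strict_trans)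
    ultimately show False by simp
  qed
  then have sp: "Suc p < length \<sigma>" "\<sigma>!(Suc p) = N" using ql by auto
  define \<tau> where "\<tau> = take p \<sigma> @ drop (Suc (Suc p)) \<sigma>"
  have tl: "length \<tau> = length \<sigma> - 2" "p \<le> length \<tau>" unfolding \<tau>_def using sp by auto
  have tk: "take p \<tau> = take p \<sigma>" "drop p \<tau> = drop (Suc (Suc p)) \<sigma>"
    unfolding \<tau>_def using sp by auto
  have seq: "\<sigma> = ins \<tau> p N"
  proof -
    have h1: "\<sigma>!p # \<sigma>!(Suc p) # drop (Suc (Suc p)) \<sigma> = drop p \<sigma>"
      by (simp only: Cons_nth_drop_Suc[OF sp(1)] Cons_nth_drop_Suc[OF pl(1)])
    have h2: "take p \<sigma> @ N # N # drop (Suc (Suc p)) \<sigma> = \<sigma>"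
      using h1 pl(2) sp(2) append_take_drop_id[of p \<sigma>] by metis
    show ?thesis by (simp only: ins_def tk h2)
  qed
  have e0: "mset \<sigma> = mset \<tau> + {#N,N#}" by (subst seq, rule ins_mset[OF tl(2)])
  have "mset \<tau> + {#N,N#} = mset \<sigma>" by (rule e0[symmetric])
  also have "\<dots> = Mn (Suc n)" by (rule m)
  also have "\<dots> = Mn n + {#N,N#}" by (simp only: Mn_Suc N_def)
  finally have e1: "mset \<tau> + {#N,N#} = Mn n + {#N,N#}" .
  then have tm: "mset \<tau> = Mn n" by simp
  have tok: "stir_ok \<tau>" unfolding stir_ok_def
  proof (intro allI impI)
    fix a b c assume ab: "a < b" and bc: "b < c" and cl: "c < length \<tau>" and eq: "\<tau>!a = \<tau>!c"
    define g where "g k = (if k < p then k else k + 2)" for k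
    have gk: "\<tau>!k = \<sigma>!(g k) \<and> g k < length \<sigma>" if "k < length \<tau>" for k
    proof (cases "k < p")
      case True
      have lt: "length (take p \<sigma>) = p" using pl(1) by simp
      have "\<tau>!k = take p \<sigma> ! k" unfolding \<tau>_def using True lt by (simp only: nth_append if_True)
      also have "\<dots> = \<sigma>!k" using True by simp
      finally show ?thesis using True pl(1) unfolding g_def by simp
    next
      case False
      have lt: "length (take p \<sigma>) = p" using pl(1) by simp
      have "\<tau>!k = drop (Suc (Suc p)) \<sigma> ! (k - p)" unfolding \<tau>_def using False lt by (simp only: nth_append if_False)
      also have "\<dots> = \<sigma>!(Suc (Suc p) + (k - p))" using sp(1) by (simp only: nth_drop Suc_leI)
      also have "Suc (Suc p) + (k - p) = k + 2" using False by simp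
      finally show ?thesis using False that tl(1) unfolding g_def by simp
    qed
    have g1: "g a < g b" "g b < g c" using ab bc unfolding g_def by auto
    have al: "a < length \<tau>" "b < length \<tau>" using ab bc cl by auto
    have A: "\<tau>!a = \<sigma>!(g a)" using gk[OF al(1)] by blast
    have B: "\<tau>!b = \<sigma>!(g b)" using gk[OF al(2)] by blast
    have C: "\<tau>!c = \<sigma>!(g c)" "g c < length \<sigma>" using gk[OF cl] by blast+
    have "\<sigma>!(g a) = \<sigma>!(g c)" using A C(1) eq by simp
    then have "\<sigma>!(g a) < \<sigma>!(g b)" using ok g1 C(2) unfolding stir_ok_def by blast
    then show "\<tau>!a < \<tau>!b" using A B by simp
  qed
  have "\<tau> \<in> stirling_perms n" using tm tok by (simp add: Q_iff)
  then show ?thesis using tl(2) seq unfolding N_def by blast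
qed

lemma ins_filter: "N \<notin> set \<tau> \<Longrightarrow> filter (\<lambda>y. y \<noteq> N) (ins \<tau> i N) = \<tau>"
proof -
  assume a: "N \<notin> set \<tau>"
  have "filter (\<lambda>y. y \<noteq> N) (take i \<tau>) = take i \<tau>"
    using a by (auto simp: filter_id_conv dest: in_set_takeD)
  moreover have "filter (\<lambda>y. y \<noteq> N) (drop i \<tau>) = drop i \<tau>"
    using a by (auto simp: filter_id_conv dest: in_set_dropD)
  ultimately show ?thesis unfolding ins_def by simp
qed

lemma ins_pos:
  assumes "N \<notin> set \<tau>" "i < i'" "i' \<le> length \<tau>"
  shows "ins \<tau> i N \<noteq> ins \<tau> i' N"
proof
  assume e: "ins \<tau> i N = ins \<tau> i' N"
  have "ins \<tau> i N ! i = N" using assms by (simp add: ins_nth)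
  moreover have "ins \<tau> i' N ! i = \<tau>!i" using assms by (simp add: ins_nth)
  ultimately have "\<tau>!i = N" using e by simp
  moreover have "i < length \<tau>" using assms by simp
  ultimately show False using assms(1) by (metis nth_mem)
qed

lemma ins_inj:
  assumes "N \<notin> set \<tau>" "N \<notin> set \<tau>'" "i \<le> length \<tau>" "i' \<le> length \<tau>'"
    and e: "ins \<tau> i N = ins \<tau>' i' N"
  shows "\<tau> = \<tau>' \<and> i = i'"
proof -
  have tt: "\<tau> = \<tau>'" using ins_filter[OF assms(1), of i] ins_filter[OF assms(2), of i'] e by simp
  have "i = i'"
  proof (rule linorder_cases[of i i'])
    assume "i < i'" then show ?thesis using ins_pos[of N \<tau> i i'] assms tt by simp
  next
    assume "i' < i" then show ?thesis using ins_pos[of N \<tau> i' i] assms tt by simp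
  qed
  with tt show ?thesis by simp
qed

lemma Q_notin: "\<tau> \<in> stirling_perms n \<Longrightarrow> Suc n \<notin> set \<tau>"
  using Mn_set by (auto simp: Q_iff)

lemma Q_Suc: "stirling_perms (Suc n) = (\<lambda>(\<tau>, i). ins \<tau> i (Suc n)) ` (SIGMA \<tau>:stirling_perms n. {..length \<tau>})"
proof
  show "stirling_perms (Suc n) \<subseteq> (\<lambda>(\<tau>, i). ins \<tau> i (Suc n)) ` (SIGMA \<tau>:stirling_perms n. {..length \<tau>})"
  proof
    fix \<sigma> assume "\<sigma> \<in> stirling_perms (Suc n)"
    then obtain \<tau> i where h: "\<tau> \<in> stirling_perms n" "i \<le> length \<tau>" "\<sigma> = ins \<tau> i (Suc n)"
      using ins_decomp by blast
    then show "\<sigma> \<in> (\<lambda>(\<tau>, i). ins \<tau> i (Suc n)) ` (SIGMA \<tau>:stirling_perms n. {..length \<tau>})"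
      by (intro image_eqI[of _ _ "(\<tau>, i)"]) auto
  qed
  show "(\<lambda>(\<tau>, i). ins \<tau> i (Suc n)) ` (SIGMA \<tau>:stirling_perms n. {..length \<tau>}) \<subseteq> stirling_perms (Suc n)"
    using ins_Q by auto
qed

lemma Q_inj: "inj_on (\<lambda>(\<tau>, i). ins \<tau> i (Suc n)) (SIGMA \<tau>:stirling_perms n. {..length \<tau>})"
  unfolding inj_on_def
proof (intro ballI impI)
  fix a b assume ha: "a \<in> (SIGMA \<tau>:stirling_perms n. {..length \<tau>})"
    and hb: "b \<in> (SIGMA \<tau>:stirling_perms n. {..length \<tau>})"
    and e: "(\<lambda>(\<tau>, i). ins \<tau> i (Suc n)) a = (\<lambda>(\<tau>, i). ins \<tau> i (Suc n)) b"
  obtain \<tau> i \<tau>' i' where ab: "a = (\<tau>,i)" "b = (\<tau>',i')" by (cases a, cases b) auto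
  have h: "\<tau> \<in> stirling_perms n" "i \<le> length \<tau>" "\<tau>' \<in> stirling_perms n" "i' \<le> length \<tau>'"
    using ha hb ab by auto
  have "ins \<tau> i (Suc n) = ins \<tau>' i' (Suc n)" using e ab by simp
  then have "\<tau> = \<tau>' \<and> i = i'" using ins_inj[of "Suc n" \<tau> \<tau>' i i'] Q_notin[OF h(1)] Q_notin[OF h(3)] h by blast
  then show "a = b" using ab by simp
qed

lemma first_pos_eqI:
  assumes "p < length \<sigma>" "\<sigma>!p = k" "\<forall>j<p. \<sigma>!j \<noteq> k"
  shows "first_pos \<sigma> k = p"
  unfolding first_pos_def
proof (rule Least_equality)
  show "p < length \<sigma> \<and> \<sigma>!p = k" using assms by blast
  fix y assume "y < length \<sigma> \<and> \<sigma>!y = k"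
  then have y: "y < length \<sigma>" "\<sigma>!y = k" by blast+
  show "p \<le> y"
  proof (rule ccontr)
    assume "\<not> p \<le> y"
    then have "y < p" by simp
    then have "\<sigma>!y \<noteq> k" using assms(3) by blast
    then show False using y(2) by blast
  qed
qed

lemma first_pos_props:
  assumes "k \<in> set \<sigma>"
  shows "first_pos \<sigma> k < length \<sigma>" "\<sigma>!(first_pos \<sigma> k) = k" "\<forall>j<first_pos \<sigma> k. \<sigma>!j \<noteq> k"
proof -
  obtain j where j: "j < length \<sigma> \<and> \<sigma>!j = k" using assms by (auto simp: in_set_conv_nth)
  then have "first_pos \<sigma> k < length \<sigma> \<and> \<sigma>!(first_pos \<sigma> k) = k" unfolding first_pos_def by (rule LeastI)
  then show "first_pos \<sigma> k < length \<sigma>" "\<sigma>!(first_pos \<sigma> k) = k" by blast+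
  show "\<forall>j<first_pos \<sigma> k. \<sigma>!j \<noteq> k"
  proof (intro allI impI)
    fix j assume a: "j < first_pos \<sigma> k"
    then have "\<not> (j < length \<sigma> \<and> \<sigma>!j = k)" unfolding first_pos_def by (rule not_less_Least)
    moreover have "j < length \<sigma>" using a \<open>first_pos \<sigma> k < length \<sigma> \<and> \<sigma>!(first_pos \<sigma> k) = k\<close> by simp
    ultimately show "\<sigma>!j \<noteq> k" by blast
  qed
qed

lemma fp_ins_N:
  assumes "N \<notin> set \<tau>" "i \<le> length \<tau>"
  shows "first_pos (ins \<tau> i N) N = i"
proof (rule first_pos_eqI)
  show "i < length (ins \<tau> i N)" using assms by simp
  show "ins \<tau> i N ! i = N" using assms by (simp add: ins_nth)
  show "\<forall>j<i. ins \<tau> i N ! j \<noteq> N"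
  proof (intro allI impI)
    fix j assume "j < i"
    then have "ins \<tau> i N ! j = \<tau>!j" "j < length \<tau>" using assms by (simp_all add: ins_nth)
    then show "ins \<tau> i N ! j \<noteq> N" using assms(1) by (metis nth_mem)
  qed
qed

lemma fp_ins_old:
  assumes nN: "N \<notin> set \<tau>" and il: "i \<le> length \<tau>" and k: "k \<in> set \<tau>"
  shows "first_pos (ins \<tau> i N) k = (if first_pos \<tau> k < i then first_pos \<tau> k else first_pos \<tau> k + 2)"
proof -
  define p where "p = first_pos \<tau> k"
  have pp: "p < length \<tau>" "\<tau>!p = k" "\<forall>j<p. \<tau>!j \<noteq> k" using first_pos_props[OF k] unfolding p_def by blast+
  have kN: "k \<noteq> N" using k nN by blast
  show ?thesis
  proof (cases "p < i")
    case True
    have "first_pos (ins \<tau> i N) k = p"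
    proof (rule first_pos_eqI)
      show "p < length (ins \<tau> i N)" using pp il by simp
      show "ins \<tau> i N ! p = k" using True pp il by (simp add: ins_nth)
      show "\<forall>j<p. ins \<tau> i N ! j \<noteq> k" using True pp il by (simp add: ins_nth)
    qed
    then show ?thesis using True unfolding p_def by simp
  next
    case False
    have "first_pos (ins \<tau> i N) k = p + 2"
    proof (rule first_pos_eqI)
      show "p + 2 < length (ins \<tau> i N)" using pp il by simp
      show "ins \<tau> i N ! (p + 2) = k" using False pp il by (simp add: ins_nth)
      show "\<forall>j<p + 2. ins \<tau> i N ! j \<noteq> k"
      proof (intro allI impI)
        fix j assume j: "j < p + 2"
        show "ins \<tau> i N ! j \<noteq> k"
        proof (cases "j < i")
          case True then show ?thesis using False pp il by (simp add: ins_nth)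
        next
          case F2: False
          show ?thesis
          proof (cases "j = i \<or> j = Suc i")
            case True then show ?thesis using kN il by (auto simp: ins_nth)
          next
            case F3: False
            then have "ins \<tau> i N ! j = \<tau>!(j-2)" "j - 2 < p" using F2 il j by (auto simp: ins_nth)
            then show ?thesis using pp(3) by simp
          qed
        qed
      qed
    qed
    then show ?thesis using False unfolding p_def by simp
  qed
qed

lemma set_ins: "i \<le> length \<tau> \<Longrightarrow> set (ins \<tau> i N) = insert N (set \<tau>)"
proof -
  assume "i \<le> length \<tau>"
  have "set \<tau> = set (take i \<tau>) \<union> set (drop i \<tau>)" by (metis append_take_drop_id set_append)
  then show ?thesis unfolding ins_def by auto
qed

lemma even_ins:
  assumes nN: "N \<notin> set \<tau>" and il: "i \<le> length \<tau>"
  shows "even_idx (ins \<tau> i N) = even_idx \<tau> + (if odd i then 1 else 0)"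
proof -
  define A where "A = {k \<in> set \<tau>. odd (first_pos \<tau> k)}"
  have eq: "{k \<in> set (ins \<tau> i N). odd (first_pos (ins \<tau> i N) k)} = (if odd i then insert N A else A)"
  proof (rule set_eqI)
    fix k
    show "k \<in> {k \<in> set (ins \<tau> i N). odd (first_pos (ins \<tau> i N) k)} \<longleftrightarrow> k \<in> (if odd i then insert N A else A)"
    proof (cases "k = N")
      case True
      then show ?thesis using fp_ins_N[OF nN il] nN unfolding A_def by (auto simp: set_ins[OF il])
    next
      case False
      show ?thesis
      proof (cases "k \<in> set \<tau>")
        case True
        then have "odd (first_pos (ins \<tau> i N) k) \<longleftrightarrow> odd (first_pos \<tau> k)"
          using fp_ins_old[OF nN il True] by simp
        then show ?thesis using True False unfolding A_def by (auto simp: set_ins[OF il])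
      next
        case F2: False
        then show ?thesis using False unfolding A_def by (auto simp: set_ins[OF il])
      qed
    qed
  qed
  have fA: "finite A" unfolding A_def by simp
  have NA: "N \<notin> A" unfolding A_def using nN by simp
  show ?thesis unfolding even_idx_def eq A_def[symmetric] using fA NA by simp
qed

lemma sign_ins:
  assumes "N \<notin> set \<tau>" "i \<le> length \<tau>"
  shows "(-1::'a::comm_ring_1) ^ even_idx (ins \<tau> i N) = (-1) ^ even_idx \<tau> * (-1) ^ i"
proof -
  have "(-1::'a) ^ (if odd i then 1 else 0) = (-1) ^ i" by simp
  then show ?thesis using even_ins[OF assms] by (simp add: power_add)
qed

definition Jset :: "nat list \<Rightarrow> nat set" where
  "Jset \<sigma> = {j. 1 \<le> j \<and> j + 1 < length \<sigma> \<and> \<sigma>!(j-1) < \<sigma>!j \<and> \<sigma>!j = \<sigma>!(j+1)}"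

lemma ap_J: "ap \<sigma> = card (Jset \<sigma>)" by (simp add: ap_def Jset_def)

lemma J_mem: "j \<in> Jset \<sigma> \<longleftrightarrow> 1 \<le> j \<and> j + 1 < length \<sigma> \<and> \<sigma>!(j-1) < \<sigma>!j \<and> \<sigma>!j = \<sigma>!(j+1)"
  by (simp add: Jset_def)

lemma J_fin: "finite (Jset \<sigma>)"
  by (rule finite_subset[of _ "{..<length \<sigma>}"]) (auto simp: Jset_def)

lemma J_nc: "j \<in> Jset \<sigma> \<Longrightarrow> Suc j \<notin> Jset \<sigma>"
  by (auto simp: Jset_def)

lemma plus2_img: "(j::nat) \<in> (\<lambda>x. x + 2) ` A \<longleftrightarrow> 2 \<le> j \<and> j - 2 \<in> A"
proof
  assume "j \<in> (\<lambda>x. x + 2) ` A" then show "2 \<le> j \<and> j - 2 \<in> A" by auto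
next
  assume "2 \<le> j \<and> j - 2 \<in> A"
  then show "j \<in> (\<lambda>x. x + 2) ` A" by (intro image_eqI[of _ _ "j - 2"]) auto
qed

lemma J_ins:
  assumes lt: "\<forall>k<length \<tau>. \<tau>!k < N" and il: "i \<le> length \<tau>"
  shows "Jset (ins \<tau> i N) = {j \<in> Jset \<tau>. j + 1 < i} \<union> (\<lambda>j. j + 2) ` {j \<in> Jset \<tau>. i < j}
     \<union> (if 1 \<le> i then {i} else {})"
proof (rule set_eqI)
  fix j
  define s where "s = ins \<tau> i N"
  have ls: "length s = length \<tau> + 2" unfolding s_def using il by simp
  have sn: "s ! k = (if k < i then \<tau>!k else if k = i \<or> k = Suc i then N else \<tau>!(k-2))" for k
    unfolding s_def using il by (rule ins_nth)
  have R: "j \<in> {j \<in> Jset \<tau>. j + 1 < i} \<union> (\<lambda>j. j + 2) ` {j \<in> Jset \<tau>. i < j} \<union> (if 1 \<le> i then {i} else {})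
      \<longleftrightarrow> (j \<in> Jset \<tau> \<and> j + 1 < i) \<or> (2 \<le> j \<and> j - 2 \<in> Jset \<tau> \<and> i < j - 2) \<or> (1 \<le> i \<and> j = i)"
    unfolding Un_iff plus2_img mem_Collect_eq by auto
  consider (a) "j + 1 < i" | (b) "j + 1 = i" | (c) "j = i" | (d) "j = i + 1" | (e) "j = i + 2" | (f) "j \<ge> i + 3"
    by linarith
  then have "j \<in> Jset s \<longleftrightarrow> (j \<in> Jset \<tau> \<and> j + 1 < i) \<or> (2 \<le> j \<and> j - 2 \<in> Jset \<tau> \<and> i < j - 2) \<or> (1 \<le> i \<and> j = i)"
  proof cases
    case a
    have v: "s!(j-1) = \<tau>!(j-1)" "s!j = \<tau>!j" "s!(j+1) = \<tau>!(j+1)" using a by (simp_all add: sn)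
    have "j + 1 < length s" "j + 1 < length \<tau>" using a il ls by simp_all
    then show ?thesis using a unfolding J_mem v by auto
  next
    case b
    have v: "s!j = \<tau>!j" "s!(j+1) = N" using b by (simp_all add: sn)
    have "\<tau>!j < N" using lt b il by simp
    then have "j \<notin> Jset s" unfolding J_mem v by auto
    then show ?thesis using b by auto
  next
    case c
    show ?thesis
    proof (cases "1 \<le> i")
      case True
      have v: "s!(j-1) = \<tau>!(j-1)" "s!j = N" "s!(j+1) = N" using c True by (simp_all add: sn)
      have "\<tau>!(j-1) < N" using lt c il True by simp
      moreover have "j + 1 < length s" using c il ls by simp
      ultimately have "j \<in> Jset s" unfolding J_mem v using c True by simp
      then show ?thesis using c True by simp
    next
      case False
      then have "j \<notin> Jset s" using c by (simp add: J_mem)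
      then show ?thesis using c False by auto
    qed
  next
    case d
    have "j \<notin> Jset s"
    proof
      assume "j \<in> Jset s"
      then have h: "j + 1 < length s" "s!j = s!(j+1)" unfolding J_mem by blast+
      have v: "s!j = N" "s!(j+1) = \<tau>!i" using d by (simp_all add: sn)
      have "i < length \<tau>" using h(1) d ls by simp
      then have "\<tau>!i < N" using lt by simp
      then show False using h(2) v by simp
    qed
    then show ?thesis using d by auto
  next
    case e
    have "j \<notin> Jset s"
    proof
      assume "j \<in> Jset s"
      then have h: "j + 1 < length s" "s!(j-1) < s!j" unfolding J_mem by blast+
      have v: "s!(j-1) = N" "s!j = \<tau>!i" using e by (simp_all add: sn)
      have "i < length \<tau>" using h(1) e ls by simp
      then have "\<tau>!i < N" using lt by simp
      then show False using h(2) v by simp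
    qed
    then show ?thesis using e by auto
  next
    case f
    have n1: "\<not> (j-1 < i)" "\<not> (j-1 = i \<or> j-1 = Suc i)" using f by auto
    have n2: "\<not> (j < i)" "\<not> (j = i \<or> j = Suc i)" using f by auto
    have n3: "\<not> (j+1 < i)" "\<not> (j+1 = i \<or> j+1 = Suc i)" using f by auto
    have ar: "j - 1 - 2 = j - 2 - 1" "j + 1 - 2 = j - 2 + 1" using f by simp_all
    have v: "s!(j-1) = \<tau>!(j-2-1)" "s!j = \<tau>!(j-2)" "s!(j+1) = \<tau>!(j-2+1)"
      using sn[of "j-1"] sn[of j] sn[of "j+1"] n1 n2 n3 ar by (simp_all only: if_False)
    have l: "j + 1 < length s \<longleftrightarrow> j - 2 + 1 < length \<tau>" using f ls by arith
    have j1: "1 \<le> j - 2" "1 \<le> j" using f by arith+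
    have "j \<in> Jset s \<longleftrightarrow> j - 2 \<in> Jset \<tau>" unfolding J_mem v l using j1 by simp
    then show ?thesis using f by auto
  qed
  then show "j \<in> Jset (ins \<tau> i N) \<longleftrightarrow> j \<in> {j \<in> Jset \<tau>. j + 1 < i} \<union> (\<lambda>j. j + 2) ` {j \<in> Jset \<tau>. i < j} \<union> (if 1 \<le> i then {i} else {})"
    unfolding R s_def .
qed

lemma ap_ins:
  assumes lt: "\<forall>k<length \<tau>. \<tau>!k < N" and il: "i \<le> length \<tau>"
  shows "ap (ins \<tau> i N) = (if i = 0 \<or> i \<in> Jset \<tau> \<or> (1 \<le> i \<and> i - 1 \<in> Jset \<tau>) then ap \<tau> else Suc (ap \<tau>))"
proof -
  define J where "J = Jset \<tau>"
  define L where "L = {j \<in> J. j + 1 < i}"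
  define R where "R = {j \<in> J. i < j}"
  define C where "C = (if 1 \<le> i then {i} else {} :: nat set)"
  define M where "M = {j \<in> J. i \<le> j + 1 \<and> j \<le> i}"
  have fJ: "finite J" unfolding J_def by (rule J_fin)
  have fL: "finite L" "finite R" "finite M" "finite C" unfolding L_def R_def M_def C_def using fJ by auto
  have e1: "Jset (ins \<tau> i N) = L \<union> (\<lambda>j. j + 2) ` R \<union> C"
    using J_ins[OF lt il] unfolding L_def R_def C_def J_def .
  have a1: "card (L \<union> (\<lambda>j. j + 2) ` R \<union> C) = card (L \<union> (\<lambda>j. j + 2) ` R) + card C"
    by (rule card_Un_disjoint) (use fL in \<open>auto simp: L_def R_def C_def\<close>)
  have a2: "card (L \<union> (\<lambda>j. j + 2) ` R) = card L + card ((\<lambda>j. j + 2) ` R)"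
    by (rule card_Un_disjoint) (use fL in \<open>auto simp: L_def R_def\<close>)
  have a3: "card ((\<lambda>j. j + 2) ` R) = card R" by (rule card_image) (simp add: inj_on_def)
  have c1: "ap (ins \<tau> i N) = card L + card R + card C" unfolding ap_J e1 a1 a2 a3 ..
  have e2: "J = L \<union> R \<union> M" unfolding L_def R_def M_def by auto
  have b1: "card (L \<union> R \<union> M) = card (L \<union> R) + card M"
    by (rule card_Un_disjoint) (use fL in \<open>auto simp: L_def R_def M_def\<close>)
  have b2: "card (L \<union> R) = card L + card R"
    by (rule card_Un_disjoint) (use fL in \<open>auto simp: L_def R_def\<close>)
  have c2: "ap \<tau> = card L + card R + card M" unfolding ap_J J_def[symmetric] using e2 b1 b2 by simp
  have cM: "card C = card M + (if i = 0 \<or> i \<in> J \<or> (1 \<le> i \<and> i - 1 \<in> J) then 0 else 1)"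
  proof (cases "i = 0")
    case True
    have "M = {}" unfolding M_def J_def using True by (auto simp: J_mem)
    moreover have "C = {}" unfolding C_def using True by simp
    ultimately show ?thesis using True by simp
  next
    case False
    have C1: "C = {i}" unfolding C_def using False by simp
    show ?thesis
    proof (cases "i \<in> J")
      case True
      have "i - 1 \<notin> J"
      proof
        assume "i - 1 \<in> J"
        then have "Suc (i - 1) \<notin> J" unfolding J_def by (rule J_nc)
        then show False using True False by simp
      qed
      then have "M = {i}" unfolding M_def using True False by (auto simp: le_Suc_eq)
      then show ?thesis using C1 True by simp
    next
      case F2: False
      show ?thesis
      proof (cases "i - 1 \<in> J")
        case True
        have "M = {i - 1}"
        proof
          show "M \<subseteq> {i - 1}"
          proof
            fix x assume "x \<in> M"
            then have "x \<in> J" "i \<le> x + 1" "x \<le> i" by (auto simp: M_def)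
            moreover have "x \<noteq> i" using \<open>x \<in> J\<close> F2 by auto
            ultimately show "x \<in> {i - 1}" by simp
          qed
          show "{i - 1} \<subseteq> M" using True False by (auto simp: M_def)
        qed
        then show ?thesis using C1 True False by simp
      next
        case F3: False
        have "M = {}"
        proof (rule equals0I)
          fix x assume "x \<in> M"
          then have "x \<in> J" "i \<le> x + 1" "x \<le> i" by (auto simp: M_def)
          then have "x = i \<or> x = i - 1" by arith
          then show False using F2 F3 \<open>x \<in> J\<close> by auto
        qed
        then show ?thesis using C1 F2 F3 False by simp
      qed
    qed
  qed
  show ?thesis using c1 c2 cM unfolding J_def by simp
qed

lemma alt_one: "even m \<Longrightarrow> (\<Sum>i\<le>m. (-1::'a::comm_ring_1) ^ i) = 1"
proof -
  assume "even m"
  then obtain k where m: "m = 2 * k" by blast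
  have "(\<Sum>i\<le>2 * k. (-1::'a) ^ i) = 1"
  proof (induction k)
    case 0 then show ?case by simp
  next
    case (Suc k)
    have e: "2 * Suc k = Suc (Suc (2 * k))" by simp
    have o1: "(-1::'a) ^ Suc (2 * k) = -1" by (rule neg_one_odd_power) simp
    have o2: "(-1::'a) ^ Suc (Suc (2 * k)) = 1" by (rule neg_one_even_power) simp
    show ?case unfolding e sum.atMost_Suc Suc.IH o1 o2 by simp
  qed
  then show ?thesis using m by simp
qed

lemma alt_sum:
  fixes x :: "'a::comm_ring_1" and J :: "nat set"
  assumes em: "even m" and Jb: "\<forall>j\<in>J. 1 \<le> j \<and> j + 1 < m" and nc: "\<forall>j\<in>J. Suc j \<notin> J"
  shows "(\<Sum>i\<le>m. (if i = 0 \<or> i \<in> J \<or> (1 \<le> i \<and> i - 1 \<in> J) then 1 else x) * (-1) ^ i) = 1"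
proof -
  define B where "B = insert 0 (J \<union> Suc ` J)"
  have Bc: "(i = 0 \<or> i \<in> J \<or> (1 \<le> i \<and> i - 1 \<in> J)) \<longleftrightarrow> i \<in> B" for i
  proof
    assume "i = 0 \<or> i \<in> J \<or> (1 \<le> i \<and> i - 1 \<in> J)"
    then show "i \<in> B" unfolding B_def
    proof (elim disjE)
      assume h: "1 \<le> i \<and> i - 1 \<in> J"
      then have "i = Suc (i - 1)" by simp
      then show "i \<in> insert 0 (J \<union> Suc ` J)" using h by (metis UnI2 image_eqI insertI2)
    qed auto
  next
    assume "i \<in> B" then show "i = 0 \<or> i \<in> J \<or> (1 \<le> i \<and> i - 1 \<in> J)" unfolding B_def by auto
  qed
  have fJ: "finite J" by (rule finite_subset[of _ "{..<m}"]) (use Jb in auto)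
  have BS: "B \<subseteq> {..m}" unfolding B_def using Jb by auto
  have t: "(if i \<in> B then 1 else x) * (-1) ^ i = x * (-1) ^ i + (if i \<in> B then (1 - x) * (-1) ^ i else 0)" for i
    by (simp add: algebra_simps)
  have "(\<Sum>i\<le>m. (if i = 0 \<or> i \<in> J \<or> (1 \<le> i \<and> i - 1 \<in> J) then 1 else x) * (-1) ^ i)
      = (\<Sum>i\<le>m. (if i \<in> B then 1 else x) * (-1) ^ i)" unfolding Bc ..
  also have "\<dots> = (\<Sum>i\<le>m. x * (-1) ^ i) + (\<Sum>i\<le>m. (if i \<in> B then (1 - x) * (-1) ^ i else 0))"
    unfolding t by (rule sum.distrib)
  also have "(\<Sum>i\<le>m. x * (-1) ^ i) = x * (\<Sum>i\<le>m. (-1) ^ i)" by (simp add: sum_distrib_left)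
  also have "(\<Sum>i\<le>m. (-1::'a) ^ i) = 1" by (rule alt_one[OF em])
  also have "(\<Sum>i\<le>m. (if i \<in> B then (1 - x) * (-1) ^ i else 0)) = (\<Sum>i\<in>{..m} \<inter> B. (1 - x) * (-1) ^ i)"
    by (rule sum.inter_restrict[symmetric]) simp
  also have "{..m} \<inter> B = B" using BS by blast
  also have "(\<Sum>i\<in>B. (1 - x) * (-1) ^ i) = (1 - x) * (\<Sum>i\<in>B. (-1) ^ i)" by (simp add: sum_distrib_left)
  also have "(\<Sum>i\<in>B. (-1::'a) ^ i) = 1"
  proof -
    have n0: "0 \<notin> J \<union> Suc ` J" using Jb by auto
    have dj: "J \<inter> Suc ` J = {}" using nc by auto
    have "(\<Sum>i\<in>B. (-1::'a) ^ i) = (-1) ^ 0 + (\<Sum>i\<in>J \<union> Suc ` J. (-1) ^ i)"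
      unfolding B_def using fJ n0 by (simp add: sum.insert)
    also have "(\<Sum>i\<in>J \<union> Suc ` J. (-1::'a) ^ i) = (\<Sum>i\<in>J. (-1) ^ i) + (\<Sum>i\<in>Suc ` J. (-1) ^ i)"
      using fJ dj by (simp add: sum.union_disjoint)
    also have "(\<Sum>i\<in>Suc ` J. (-1::'a) ^ i) = (\<Sum>i\<in>J. (-1) ^ Suc i)"
      by (simp add: sum.reindex)
    also have "(\<Sum>i\<in>J. (-1::'a) ^ Suc i) = - (\<Sum>i\<in>J. (-1) ^ i)"
      by (simp add: sum_negf)
    finally show ?thesis by simp
  qed
  finally show ?thesis by (simp add: algebra_simps)
qed

lemma fiber_sum:
  fixes x :: "'a::comm_ring_1"
  assumes tq: "\<tau> \<in> stirling_perms n"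
  shows "(\<Sum>i\<le>length \<tau>. x ^ ap (ins \<tau> i (Suc n)) * (-1) ^ even_idx (ins \<tau> i (Suc n)))
       = x ^ ap \<tau> * (-1) ^ even_idx \<tau>"
proof -
  define N where "N = Suc n"
  have m: "mset \<tau> = Mn n" using tq by (simp add: Q_iff)
  have lt: "\<forall>k<length \<tau>. \<tau>!k < N"
  proof (intro allI impI)
    fix k assume "k < length \<tau>"
    then have "\<tau>!k \<in> set \<tau>" by (rule nth_mem)
    then show "\<tau>!k < N" using Mn_set[OF m] unfolding N_def by auto
  qed
  have nN: "N \<notin> set \<tau>" using Mn_set[OF m] unfolding N_def by auto
  have em: "even (length \<tau>)" using Mn_len[OF m] by simp
  define J where "J = Jset \<tau>"
  define c where "c = (-1::'a) ^ even_idx \<tau>"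
  define h where "h i = (if i = 0 \<or> i \<in> J \<or> (1 \<le> i \<and> i - 1 \<in> J) then 1 else x) * (-1) ^ i" for i
  have tmeq: "x ^ ap (ins \<tau> i N) * (-1) ^ even_idx (ins \<tau> i N) = x ^ ap \<tau> * c * h i"
    if "i \<in> {..length \<tau>}" for i
  proof -
    have il: "i \<le> length \<tau>" using that by simp
    have sg: "(-1::'a) ^ even_idx (ins \<tau> i N) = c * (-1) ^ i" unfolding c_def by (rule sign_ins[OF nN il])
    show ?thesis
    proof (cases "i = 0 \<or> i \<in> J \<or> (1 \<le> i \<and> i - 1 \<in> J)")
      case True
      then have "ap (ins \<tau> i N) = ap \<tau>" using ap_ins[OF lt il] unfolding J_def by simp
      then show ?thesis unfolding sg h_def using True by (simp add: algebra_simps)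
    next
      case False
      then have "ap (ins \<tau> i N) = Suc (ap \<tau>)" using ap_ins[OF lt il] unfolding J_def by simp
      then show ?thesis unfolding sg h_def using False by (simp add: algebra_simps)
    qed
  qed
  have "(\<Sum>i\<le>length \<tau>. x ^ ap (ins \<tau> i N) * (-1) ^ even_idx (ins \<tau> i N)) = (\<Sum>i\<le>length \<tau>. x ^ ap \<tau> * c * h i)"
    by (rule sum.cong) (simp_all only: tmeq)
  also have "\<dots> = x ^ ap \<tau> * c * (\<Sum>i\<le>length \<tau>. h i)" by (simp add: sum_distrib_left)
  also have "(\<Sum>i\<le>length \<tau>. h i) = 1" unfolding h_def
  proof (rule alt_sum[OF em])
    show "\<forall>j\<in>J. 1 \<le> j \<and> j + 1 < length \<tau>" unfolding J_def by (auto simp: J_mem)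
    show "\<forall>j\<in>J. Suc j \<notin> J" unfolding J_def using J_nc by blast
  qed
  finally show ?thesis unfolding N_def c_def by simp
qed

lemma stir_main: "finite (stirling_perms n) \<and>
  (\<Sum>\<sigma>\<in>stirling_perms n. (x::'a::comm_ring_1) ^ ap \<sigma> * (-1) ^ even_idx \<sigma>) = 1"
proof (induction n)
  case 0
  have "ap [] = 0" by (simp add: ap_def)
  moreover have "even_idx [] = 0" by (simp add: even_idx_def)
  ultimately show ?case by (simp add: Q0)
next
  case (Suc n)
  define S where "S = (SIGMA \<tau>:stirling_perms n. {..length \<tau>})"
  define f where "f = (\<lambda>(\<tau>, i). ins \<tau> i (Suc n))"
  define g where "g \<sigma> = (x::'a) ^ ap \<sigma> * (-1) ^ even_idx \<sigma>" for \<sigma>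
  have finQ: "finite (stirling_perms n)" using Suc.IH by blast
  have fin: "finite S" unfolding S_def using finQ by auto
  have QS: "stirling_perms (Suc n) = f ` S" unfolding f_def S_def by (rule Q_Suc)
  have inj: "inj_on f S" unfolding f_def S_def by (rule Q_inj)
  have "(\<Sum>\<sigma>\<in>stirling_perms (Suc n). g \<sigma>) = (\<Sum>p\<in>S. g (f p))"
    unfolding QS using sum.reindex[OF inj, of g] by simp
  also have "\<dots> = (\<Sum>(\<tau>, i)\<in>S. g (ins \<tau> i (Suc n)))"
    by (rule sum.cong) (auto simp: f_def)
  also have "\<dots> = (\<Sum>\<tau>\<in>stirling_perms n. \<Sum>i\<le>length \<tau>. g (ins \<tau> i (Suc n)))"
    unfolding S_def by (rule sum.Sigma[symmetric]) (use finQ in auto)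
  also have "\<dots> = (\<Sum>\<tau>\<in>stirling_perms n. g \<tau>)"
    by (rule sum.cong) (simp_all add: g_def fiber_sum)
  also have "\<dots> = 1" using Suc.IH unfolding g_def by blast
  finally have "(\<Sum>\<sigma>\<in>stirling_perms (Suc n). g \<sigma>) = 1" .
  moreover have "finite (stirling_perms (Suc n))" unfolding QS using fin by simp
  ultimately show ?case unfolding g_def by blast
qed

theorem theorem2:
  fixes n :: nat and x :: "'a :: comm_ring_1"
  assumes "n \<ge> 1"
  shows "(\<Sum>\<sigma>\<in>stirling_perms n. x ^ ap \<sigma> * (-1) ^ even_idx \<sigma>)
           = (\<Sum>(\<pi>, M)\<in>marked_perms n. x ^ asc \<pi> * (-1) ^ card M)
       \<and> (\<Sum>(\<pi>, M)\<in>marked_perms n. x ^ asc \<pi> * (-1) ^ card M) = 1"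
proof -
  have a: "(\<Sum>\<sigma>\<in>stirling_perms n. x ^ ap \<sigma> * (-1) ^ even_idx \<sigma>) = 1" using stir_main by blast
  have b: "(\<Sum>(\<pi>, M)\<in>marked_perms n. x ^ asc \<pi> * (-1) ^ card M) = 1" by (rule marked_side)
  show ?thesis unfolding a b by simp
qed

end
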